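(* Let $(A,B,R)$ be a normalized formal context and $(X,Y)\in\mathcal{C}_N$. If $X^{\uparrow}\neq\varnothing$, then $X^{\uparrow\downarrow}=X$, i.e. $\langle X,X^{\uparrow}\rangle$ is a formal concept of $(A,B,R)$.
   Context: A formal context is a triple $(A,B,R)$ with $R\subseteq A\times B$. Derivation operators: $X^{\uparrow}=\{a\in A\mid (a,b)\in R \text{ for all } b\in X\}$ for $X\subseteq B$ and $Y^{\downarrow}=\{b\in B\mid (a,b)\in R \text{ for all } a\in Y\}$ for $Y\subseteq A$; a formal concept is a pair $\langle X,Y\rangle$ with $X^\uparrow=Y$, $Y^\downarrow=X$. Necessity operators: $X^{\uparrow_N}=\{a\in A\mid \text{for all } b\in B,\ (a,b)\in R\Rightarrow b\in X\}$ and $Y^{\downarrow^N}=\{b\in B\mid \text{for all } a\in A,\ (a,b)\in R\Rightarrow a\in Y\}$. $\mathcal{C}_N=\{(X,Y)\mid X\subseteq B,\ Y\subseteq A,\ X^{\uparrow_N}=Y,\ Y^{\downarrow^N}=X\}$. The context is normalized if for every $a\in A$ there are $b,b'\in B$ with $(a,b)\in R$, $(a,b')\notin R$, and for every $b\in B$ there are $a,a'\in A$ with $(a,b)\in R$, $(a',b)\notin R$. *)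

theory Defs
  imports Main
begin

definition fc_up :: "'a set \<Rightarrow> ('a \<times> 'b) set \<Rightarrow> 'b set \<Rightarrow> 'a set" where
  "fc_up A R X = {a \<in> A. \<forall>b \<in> X. (a, b) \<in> R}"

definition fc_down :: "'b set \<Rightarrow> ('a \<times> 'b) set \<Rightarrow> 'a set \<Rightarrow> 'b set" where
  "fc_down B R Y = {b \<in> B. \<forall>a \<in> Y. (a, b) \<in> R}"

definition nec_up :: "'a set \<Rightarrow> 'b set \<Rightarrow> ('a \<times> 'b) set \<Rightarrow> 'b set \<Rightarrow> 'a set" where
  "nec_up A B R X = {a \<in> A. \<forall>b \<in> B. (a, b) \<in> R \<longrightarrow> b \<in> X}"

definition nec_down :: "'a set \<Rightarrow> 'b set \<Rightarrow> ('a \<times> 'b) set \<Rightarrow> 'a set \<Rightarrow> 'b set" where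
  "nec_down A B R Y = {b \<in> B. \<forall>a \<in> A. (a, b) \<in> R \<longrightarrow> a \<in> Y}"

definition C_N :: "'a set \<Rightarrow> 'b set \<Rightarrow> ('a \<times> 'b) set \<Rightarrow> ('b set \<times> 'a set) set" where
  "C_N A B R = {(X, Y). X \<subseteq> B \<and> Y \<subseteq> A \<and> nec_up A B R X = Y \<and> nec_down A B R Y = X}"

definition normalized :: "'a set \<Rightarrow> 'b set \<Rightarrow> ('a \<times> 'b) set \<Rightarrow> bool" where
  "normalized A B R \<longleftrightarrow>
     (\<forall>a \<in> A. \<exists>b \<in> B. \<exists>b' \<in> B. (a, b) \<in> R \<and> (a, b') \<notin> R) \<and>
     (\<forall>b \<in> B. \<exists>a \<in> A. \<exists>a' \<in> A. (a, b) \<in> R \<and> (a', b) \<notin> R)"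

definition formal_concept :: "'a set \<Rightarrow> 'b set \<Rightarrow> ('a \<times> 'b) set \<Rightarrow> 'b set \<Rightarrow> 'a set \<Rightarrow> bool" where
  "formal_concept A B R X Y \<longleftrightarrow> fc_up A R X = Y \<and> fc_down B R Y = X"

end

theory Submission
  imports Defs
begin

theorem mainTheorem5:
  fixes A :: "'a set" and B :: "'b set" and R :: "('a \<times> 'b) set"
    and X :: "'b set" and Y :: "'a set"
  assumes "R \<subseteq> A \<times> B"
    and "normalized A B R"
    and "(X, Y) \<in> C_N A B R"
    and "fc_up A R X \<noteq> {}"
  shows "fc_down B R (fc_up A R X) = X \<and> formal_concept A B R X (fc_up A R X)"
proof -
  have XB: "X \<subseteq> B" and Yd: "Y = nec_up A B R X" and Xd: "X = nec_down A B R Y"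
    using assms(3) unfolding C_N_def by auto
  have sub: "fc_down B R (fc_up A R X) \<subseteq> X"
  proof
    fix b assume b: "b \<in> fc_down B R (fc_up A R X)"
    show "b \<in> X"
    proof (cases "X = {}")
      case True
      then have "fc_up A R X = A" unfolding fc_up_def by auto
      moreover from b have "b \<in> B" unfolding fc_down_def by auto
      ultimately show ?thesis using b assms(2) unfolding normalized_def fc_down_def by blast
    next
      case False
      then obtain b0 where b0: "b0 \<in> X" by auto
      obtain a0 where a0: "a0 \<in> fc_up A R X" using assms(4) by auto
      have a0A: "a0 \<in> A" and a0r: "\<forall>b\<in>X. (a0, b) \<in> R" using a0 unfolding fc_up_def by auto
      have "(a0, b0) \<in> R" using a0r b0 by auto
      then have "a0 \<in> Y" using b0 a0A Xd XB unfolding nec_down_def by auto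
      then have N: "\<forall>b\<in>B. (a0, b) \<in> R \<longrightarrow> b \<in> X" using Yd unfolding nec_up_def by auto
      from b a0 have "(a0, b) \<in> R" "b \<in> B" unfolding fc_down_def by auto
      then show ?thesis using N by auto
    qed
  qed
  have "X \<subseteq> fc_down B R (fc_up A R X)" using XB unfolding fc_down_def fc_up_def by auto
  with sub have "fc_down B R (fc_up A R X) = X" by auto
  then show ?thesis unfolding formal_concept_def by auto
qed

end
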